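(* Let $G$ be a group acting on the binary tree. If $G$ contains a weakly branch group, then $G$ is weakly branch. If $G$ contains a subgroup $H$ such that, for every $n\in\mathbb N$, $(\mho_2)^n(H)$ acts transitively on every subtree at level $n$, then $G$ is saturated.
   Context: The binary tree is $\mathcal T=X^*$, $X=\{0,1\}$, with isometry group $W$; $G\le W$. For $v\in X^*$, $g\in W$: $v*g$ acts as $g$ on the subtree $v\mathcal T$ and fixes other vertices; $g@v$ is the state, $(vw)^g=v^gw^{g@v}$. $G$ is level-transitive if transitive on each $X^n$; weakly branch if level-transitive and $(v*G)\cap G\ne1$ for all $v\in X^*$; saturated if for every $n$ it contains a characteristic subgroup $H_n$ fixing $X^n$ with $\{h@v:h\in H_n\}$ level-transitive for all $v\in X^n$. $\mho_2(H)$ is the subgroup generated by squares of elements of $H$, and $(\mho_2)^n$ its $n$-fold iterate. "Acts transitively on every subtree at level $n$" means that for each $v\in X^n$ the group fixes $v$ and its restriction to $v\mathcal T$ is level-transitive. *)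

theory Defs
  imports "HOL-Algebra.Algebra" "HOL-Library.Sublist"
begin

text \<open>Binary tree X^* with X = {0,1} modelled as bool lists.
  Isometries (tree automorphisms) are bijections preserving length and prefixes.\<close>

definition is_aut :: "(bool list \<Rightarrow> bool list) \<Rightarrow> bool" where
  "is_aut g \<longleftrightarrow> bij g \<and> (\<forall>v. length (g v) = length v)
      \<and> (\<forall>v w. prefix v w \<longrightarrow> prefix (g v) (g w))"

text \<open>The group W; right action convention v^(gh) = (v^g)^h, so g*h = h o g.\<close>
definition W_grp :: "(bool list \<Rightarrow> bool list) monoid" where
  "W_grp = \<lparr>carrier = {g. is_aut g}, monoid.mult = (\<lambda>g h. h \<circ> g), one = id\<rparr>"

text \<open>State g@v: (vw)^g = v^g w^(g@v).\<close>
definition state :: "(bool list \<Rightarrow> bool list) \<Rightarrow> bool list \<Rightarrow> (bool list \<Rightarrow> bool list)" where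
  "state g v = (\<lambda>w. drop (length v) (g (v @ w)))"

definition rist :: "bool list \<Rightarrow> (bool list \<Rightarrow> bool list) \<Rightarrow> (bool list \<Rightarrow> bool list)" where
  "rist v g = (\<lambda>u. if prefix v u then v @ g (drop (length v) u) else u)"

definition level_transitive :: "(bool list \<Rightarrow> bool list) set \<Rightarrow> bool" where
  "level_transitive S \<longleftrightarrow>
     (\<forall>n u w. length u = n \<longrightarrow> length w = n \<longrightarrow> (\<exists>g\<in>S. g u = w))"

definition weakly_branch :: "(bool list \<Rightarrow> bool list) set \<Rightarrow> bool" where
  "weakly_branch G \<longleftrightarrow> level_transitive G \<and>
     (\<forall>v. \<exists>h. h \<in> rist v ` G \<and> h \<in> G \<and> h \<noteq> id)"

definition characteristic :: "(bool list \<Rightarrow> bool list) set \<Rightarrow> (bool list \<Rightarrow> bool list) set \<Rightarrow> bool" where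
  "characteristic H G \<longleftrightarrow> subgroup H (W_grp\<lparr>carrier := G\<rparr>) \<and>
     (\<forall>\<phi> \<in> iso (W_grp\<lparr>carrier := G\<rparr>) (W_grp\<lparr>carrier := G\<rparr>). \<phi> ` H = H)"

definition fixes_level :: "nat \<Rightarrow> (bool list \<Rightarrow> bool list) set \<Rightarrow> bool" where
  "fixes_level n H \<longleftrightarrow> (\<forall>h\<in>H. \<forall>v. length v = n \<longrightarrow> h v = v)"

definition saturated :: "(bool list \<Rightarrow> bool list) set \<Rightarrow> bool" where
  "saturated G \<longleftrightarrow> (\<forall>n. \<exists>H. characteristic H G \<and> fixes_level n H \<and>
      (\<forall>v. length v = n \<longrightarrow> level_transitive ((\<lambda>h. state h v) ` H)))"

definition mho2 :: "(bool list \<Rightarrow> bool list) set \<Rightarrow> (bool list \<Rightarrow> bool list) set" where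
  "mho2 H = generate W_grp {h \<otimes>\<^bsub>W_grp\<^esub> h | h. h \<in> H}"

definition acts_trans_subtrees :: "nat \<Rightarrow> (bool list \<Rightarrow> bool list) set \<Rightarrow> bool" where
  "acts_trans_subtrees n K \<longleftrightarrow> (\<forall>v. length v = n \<longrightarrow>
      (\<forall>h\<in>K. h v = v) \<and> level_transitive ((\<lambda>h. state h v) ` K))"

end

theory Submission
  imports Defs
begin

lemma prefix_len1:
  assumes "prefix v x" "length x = Suc (length v)"
  shows "\<exists>c. x = v @ [c]"
proof -
  obtain z where z: "x = v @ z" using assms(1) by (auto simp: prefix_def)
  then have "length z = 1" using assms(2) by simp
  then obtain c where "z = [c]" by (cases z) auto
  then show ?thesis using z by blast
qed

lemma aut_child:
  assumes "is_aut g" "g v = v"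
  shows "\<exists>c. g (v @ [b]) = v @ [c]"
proof -
  have "prefix (g v) (g (v @ [b]))" using assms(1) unfolding is_aut_def by auto
  moreover have "length (g (v @ [b])) = Suc (length v)" using assms(1) unfolding is_aut_def by auto
  ultimately show ?thesis using prefix_len1[of v "g (v @ [b])"] assms(2) by simp
qed

lemma aut_square:
  assumes "is_aut g" "g v = v"
  shows "g (g (v @ [b])) = v @ [b]"
proof -
  have inj: "inj g" using assms(1) unfolding is_aut_def bij_def by auto
  obtain c where c: "g (v @ [b]) = v @ [c]" using aut_child[OF assms] by blast
  obtain d where d: "g (v @ [\<not>b]) = v @ [d]" using aut_child[OF assms] by blast
  show ?thesis
  proof (cases "c = b")
    case True then show ?thesis using c by simp
  next
    case False
    then have cb: "c = (\<not> b)" by auto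
    have "d \<noteq> c"
    proof
      assume "d = c"
      then have "g (v @ [\<not>b]) = g (v @ [b])" using c d by simp
      then have "v @ [\<not>b] = v @ [b]" using inj unfolding inj_def by blast
      then show False by simp
    qed
    then have "d = b" using cb by auto
    then show ?thesis using c d cb by simp
  qed
qed

lemma aut_inv:
  assumes "is_aut g"
  shows "is_aut (inv_into UNIV g)"
proof -
  have b: "bij g" and l: "\<And>v. length (g v) = length v"
    and p: "\<And>v w. prefix v w \<Longrightarrow> prefix (g v) (g w)" using assms unfolding is_aut_def by auto
  have bi: "bij (inv_into UNIV g)" using b by (simp add: bij_imp_bij_inv)
  have gi: "\<And>x. g (inv_into UNIV g x) = x" using b by (simp add: bij_def surj_f_inv_f)
  have ig: "\<And>x. inv_into UNIV g (g x) = x" using b by (simp add: bij_def)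
  have li: "\<And>v. length (inv_into UNIV g v) = length v" 
  proof -
    fix v
    have "length (g (inv_into UNIV g v)) = length (inv_into UNIV g v)" by (rule l)
    then show "length (inv_into UNIV g v) = length v" using gi[of v] by simp
  qed
  have pi: "prefix (inv_into UNIV g v) (inv_into UNIV g w)" if "prefix v w" for v w
  proof -
    define u where "u = take (length v) (inv_into UNIV g w)"
    have pu: "prefix u (inv_into UNIV g w)" unfolding u_def by (simp add: take_is_prefix)
    have pw: "prefix (g u) w" using p[OF pu] gi[of w] by simp
    have lu: "length (g u) = length v" unfolding u_def using l li prefix_length_le[OF that]
      by (simp add: min_def)
    have a1: "prefix (g u) v" by (rule prefix_length_prefix[OF pw that]) (simp add: lu)
    have a2: "prefix v (g u)" by (rule prefix_length_prefix[OF that pw]) (simp add: lu)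
    have "g u = v" by (rule prefix_order.antisym[OF a1 a2])
    then have "u = inv_into UNIV g v" using ig[of u] by simp
    then show ?thesis using take_is_prefix[of "length v" "inv_into UNIV g w"] unfolding u_def by simp
  qed
  show ?thesis unfolding is_aut_def using bi li pi by auto
qed

lemma aut_comp:
  assumes "is_aut g" "is_aut h"
  shows "is_aut (h \<circ> g)"
proof -
  have "bij (h \<circ> g)" using assms unfolding is_aut_def by (simp add: bij_comp)
  moreover have "\<forall>v. length ((h \<circ> g) v) = length v" using assms unfolding is_aut_def comp_def by metis
  moreover have "\<forall>v w. prefix v w \<longrightarrow> prefix ((h \<circ> g) v) ((h \<circ> g) w)"
    using assms unfolding is_aut_def comp_def by blast
  ultimately show ?thesis unfolding is_aut_def by blast
qed

lemma W_carrier: "(g \<in> carrier W_grp) = is_aut g"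
  by (simp add: W_grp_def)

lemma W_mult: "g \<otimes>\<^bsub>W_grp\<^esub> h = h \<circ> g"
  by (simp add: W_grp_def)

lemma W_one: "\<one>\<^bsub>W_grp\<^esub> = id"
  by (simp add: W_grp_def)

lemma aut_id: "is_aut id"
  unfolding is_aut_def by simp

lemma aut_inv_comp: "is_aut x \<Longrightarrow> x \<circ> inv_into UNIV x = id"
  unfolding is_aut_def bij_def by (simp add: surj_iff)

lemma W_group: "group W_grp"
proof (rule groupI)
  show "\<And>x y. x \<in> carrier W_grp \<Longrightarrow> y \<in> carrier W_grp \<Longrightarrow> x \<otimes>\<^bsub>W_grp\<^esub> y \<in> carrier W_grp"
    unfolding W_carrier W_mult by (rule aut_comp)
  show "\<one>\<^bsub>W_grp\<^esub> \<in> carrier W_grp"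
    unfolding W_carrier W_one by (rule aut_id)
  show "\<And>x y z. x \<in> carrier W_grp \<Longrightarrow> y \<in> carrier W_grp \<Longrightarrow> z \<in> carrier W_grp \<Longrightarrow>
    x \<otimes>\<^bsub>W_grp\<^esub> y \<otimes>\<^bsub>W_grp\<^esub> z = x \<otimes>\<^bsub>W_grp\<^esub> (y \<otimes>\<^bsub>W_grp\<^esub> z)"
    unfolding W_mult by (simp add: comp_assoc)
  show "\<And>x. x \<in> carrier W_grp \<Longrightarrow> \<one>\<^bsub>W_grp\<^esub> \<otimes>\<^bsub>W_grp\<^esub> x = x"
    unfolding W_mult W_one by simp
  show "\<And>x. x \<in> carrier W_grp \<Longrightarrow> \<exists>y\<in>carrier W_grp. y \<otimes>\<^bsub>W_grp\<^esub> x = \<one>\<^bsub>W_grp\<^esub>"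
  proof -
    fix x assume "x \<in> carrier W_grp"
    then have a: "is_aut x" unfolding W_carrier .
    have "inv_into UNIV x \<in> carrier W_grp" unfolding W_carrier by (rule aut_inv[OF a])
    moreover have "inv_into UNIV x \<otimes>\<^bsub>W_grp\<^esub> x = \<one>\<^bsub>W_grp\<^esub>"
      unfolding W_mult W_one by (rule aut_inv_comp[OF a])
    ultimately show "\<exists>y\<in>carrier W_grp. y \<otimes>\<^bsub>W_grp\<^esub> x = \<one>\<^bsub>W_grp\<^esub>" by blast
  qed
qed

lemma W_inv: "g \<in> carrier W_grp \<Longrightarrow> inv\<^bsub>W_grp\<^esub> g = inv_into UNIV g"
proof -
  assume g: "g \<in> carrier W_grp"
  then have a: "is_aut g" unfolding W_carrier .
  have c1: "inv_into UNIV g \<otimes>\<^bsub>W_grp\<^esub> g = \<one>\<^bsub>W_grp\<^esub>"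
    unfolding W_mult W_one by (rule aut_inv_comp[OF a])
  have c2: "inv_into UNIV g \<in> carrier W_grp" unfolding W_carrier by (rule aut_inv[OF a])
  show ?thesis by (rule group.inv_equality[OF W_group c1 g c2])
qed


definition fixl :: "nat \<Rightarrow> (bool list \<Rightarrow> bool list) \<Rightarrow> bool" where
  "fixl n g \<longleftrightarrow> (\<forall>v. length v = n \<longrightarrow> g v = v)"

lemma gen_fix:
  assumes S: "S \<subseteq> carrier W_grp" and F: "\<forall>h\<in>S. fixl n h" and h: "h \<in> generate W_grp S"
  shows "fixl n h"
  using h
proof (induction rule: generate.induct)
  case one
  then show ?case unfolding W_one fixl_def by simp
next
  case (incl h)
  then show ?case using F by blast
next
  case (inv h)
  then have hc: "h \<in> carrier W_grp" using S by blast
  then have a: "is_aut h" unfolding W_carrier .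
  then have ij: "inj h" unfolding is_aut_def bij_def by blast
  have "fixl n h" using F inv by blast
  then have "\<forall>v. length v = n \<longrightarrow> inv_into UNIV h v = v"
    unfolding fixl_def by (metis ij inv_f_f)
  then show ?case unfolding W_inv[OF hc] fixl_def by blast
next
  case (eng h1 h2)
  then show ?case unfolding W_mult fixl_def by simp
qed

lemma sq_fix:
  assumes a: "is_aut g" and f: "fixl n g"
  shows "fixl (Suc n) (g \<otimes>\<^bsub>W_grp\<^esub> g)"
  unfolding fixl_def W_mult
proof (intro allI impI)
  fix u :: "bool list" assume u: "length u = Suc n"
  then have ne: "u \<noteq> []" by auto
  define v where "v = butlast u"
  have uv: "u = v @ [last u]" unfolding v_def using ne by simp
  have "length v = n" unfolding v_def using u by simp
  then have "g v = v" using f unfolding fixl_def by blast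
  then have "g (g (v @ [last u])) = v @ [last u]" by (rule aut_square[OF a])
  then show "(g \<circ> g) u = u" using uv by simp
qed

lemma mho_props:
  assumes G: "subgroup G W_grp"
  shows "subgroup ((mho2 ^^ n) G) W_grp \<and> (mho2 ^^ n) G \<subseteq> G \<and> (\<forall>h\<in>(mho2 ^^ n) G. fixl n h)"
proof (induction n)
  case 0
  have "\<forall>h\<in>G. fixl 0 h"
  proof
    fix h assume "h \<in> G"
    then have "is_aut h" using subgroup.subset[OF G] unfolding W_carrier[symmetric] by blast
    then have "length (h []) = length ([]::bool list)" unfolding is_aut_def by blast
    then show "fixl 0 h" unfolding fixl_def by simp
  qed
  then show ?case using G by simp
next
  case (Suc n)
  define M where "M = (mho2 ^^ n) G"
  define Sq where "Sq = {h \<otimes>\<^bsub>W_grp\<^esub> h | h. h \<in> M}"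
  have sM: "subgroup M W_grp" and MG: "M \<subseteq> G" and fM: "\<forall>h\<in>M. fixl n h"
    using Suc unfolding M_def by auto
  have SqM: "Sq \<subseteq> M" unfolding Sq_def using subgroup.m_closed[OF sM] by blast
  have Mc: "M \<subseteq> carrier W_grp" using subgroup.subset[OF sM] .
  have Sqc: "Sq \<subseteq> carrier W_grp" using SqM Mc by blast
  have eq: "(mho2 ^^ Suc n) G = generate W_grp Sq" unfolding Sq_def M_def mho2_def by simp
  have s1: "subgroup (generate W_grp Sq) W_grp"
    by (rule group.generate_is_subgroup[OF W_group Sqc])
  have s2: "generate W_grp Sq \<subseteq> M"
    by (rule group.generate_subgroup_incl[OF W_group SqM sM])
  have fS: "\<forall>h\<in>Sq. fixl (Suc n) h"
  proof
    fix x assume "x \<in> Sq"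
    then obtain h where x: "x = h \<otimes>\<^bsub>W_grp\<^esub> h" and hM: "h \<in> M" unfolding Sq_def by blast
    have "is_aut h" using hM Mc unfolding W_carrier[symmetric] by blast
    then show "fixl (Suc n) x" unfolding x using sq_fix fM hM by blast
  qed
  have s3: "\<forall>h\<in>generate W_grp Sq. fixl (Suc n) h"
    using gen_fix[OF Sqc fS] by blast
  show ?case unfolding eq using s1 s2 s3 MG by blast
qed

lemma mho_mono1: "A \<subseteq> B \<Longrightarrow> mho2 A \<subseteq> mho2 B"
  unfolding mho2_def by (rule group.mono_generate[OF W_group]) blast

lemma mho_mono: "A \<subseteq> B \<Longrightarrow> (mho2 ^^ n) A \<subseteq> (mho2 ^^ n) B"
  by (induction n) (auto dest: mho_mono1)

lemma mho_iso:
  assumes G: "subgroup G W_grp"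
    and phi: "\<phi> \<in> iso (W_grp\<lparr>carrier := G\<rparr>) (W_grp\<lparr>carrier := G\<rparr>)"
    and S: "S \<subseteq> G"
  shows "\<phi> ` mho2 S = mho2 (\<phi> ` S)"
proof -
  define A where "A = W_grp\<lparr>carrier := G\<rparr>"
  have gA: "group A" unfolding A_def by (rule subgroup.subgroup_is_group[OF G W_group])
  have hom: "\<phi> \<in> hom A A" using phi unfolding A_def iso_def by blast
  have gh: "group_hom A A \<phi>"
    unfolding group_hom_def group_hom_axioms_def using gA hom by blast
  define Sq where "Sq = {h \<otimes>\<^bsub>W_grp\<^esub> h | h. h \<in> S}"
  have SqG: "Sq \<subseteq> G" unfolding Sq_def using subgroup.m_closed[OF G] S by blast
  have sqimg: "\<And>T. {h \<otimes>\<^bsub>W_grp\<^esub> h | h. h \<in> T} = (\<lambda>h. h \<otimes>\<^bsub>W_grp\<^esub> h) ` T" by blast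
  have img: "\<phi> ` Sq = {h \<otimes>\<^bsub>W_grp\<^esub> h | h. h \<in> \<phi> ` S}"
  proof -
    have e: "\<And>h. h \<in> S \<Longrightarrow> \<phi> (h \<otimes>\<^bsub>W_grp\<^esub> h) = \<phi> h \<otimes>\<^bsub>W_grp\<^esub> \<phi> h"
      using hom_mult[OF hom] S unfolding A_def by auto
    have "\<phi> ` Sq = (\<lambda>h. \<phi> (h \<otimes>\<^bsub>W_grp\<^esub> h)) ` S" unfolding Sq_def sqimg image_image ..
    also have "\<dots> = (\<lambda>h. \<phi> h \<otimes>\<^bsub>W_grp\<^esub> \<phi> h) ` S" using e by (rule image_cong[OF refl])
    also have "\<dots> = (\<lambda>k. k \<otimes>\<^bsub>W_grp\<^esub> k) ` (\<phi> ` S)" unfolding image_image ..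
    finally show ?thesis unfolding sqimg .
  qed
  have pSqG: "\<phi> ` Sq \<subseteq> G" using SqG hom_in_carrier[OF hom] unfolding A_def by auto
  have "generate A (\<phi> ` Sq) = \<phi> ` generate A Sq"
    by (rule group_hom.generate_img[OF gh]) (simp add: A_def SqG)
  moreover have "generate A Sq = generate W_grp Sq"
    unfolding A_def by (rule group.generate_consistent[OF W_group SqG G])
  moreover have "generate A (\<phi> ` Sq) = generate W_grp (\<phi> ` Sq)"
    unfolding A_def by (rule group.generate_consistent[OF W_group pSqG G])
  ultimately have "generate W_grp (\<phi> ` Sq) = \<phi> ` generate W_grp Sq" by simp
  then show ?thesis unfolding mho2_def using img Sq_def by simp
qed

lemma mho_char:
  assumes G: "subgroup G W_grp"
    and phi: "\<phi> \<in> iso (W_grp\<lparr>carrier := G\<rparr>) (W_grp\<lparr>carrier := G\<rparr>)"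
  shows "\<phi> ` (mho2 ^^ n) G = (mho2 ^^ n) G"
proof (induction n)
  case 0
  have "bij_betw \<phi> G G" using phi unfolding iso_def by simp
  then show ?case by (simp add: bij_betw_def)
next
  case (Suc n)
  have "(mho2 ^^ n) G \<subseteq> G" using mho_props[OF G] by blast
  then have "\<phi> ` mho2 ((mho2 ^^ n) G) = mho2 (\<phi> ` (mho2 ^^ n) G)"
    by (rule mho_iso[OF G phi])
  then show ?case using Suc by simp
qed

lemma lt_mono: "level_transitive S \<Longrightarrow> S \<subseteq> T \<Longrightarrow> level_transitive T"
  unfolding level_transitive_def by blast

theorem lemma3p9:
  assumes "subgroup G W_grp"
  shows "((\<exists>K. subgroup K W_grp \<and> K \<subseteq> G \<and> weakly_branch K) \<longrightarrow> weakly_branch G)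
       \<and> ((\<exists>H. subgroup H W_grp \<and> H \<subseteq> G \<and>
              (\<forall>n. acts_trans_subtrees n ((mho2 ^^ n) H))) \<longrightarrow> saturated G)"
proof (intro conjI impI)
  assume "\<exists>K. subgroup K W_grp \<and> K \<subseteq> G \<and> weakly_branch K"
  then obtain K where KG: "K \<subseteq> G" and wb: "weakly_branch K" by blast
  have "level_transitive G" using wb KG lt_mono unfolding weakly_branch_def by blast
  moreover have "\<forall>v. \<exists>h. h \<in> rist v ` G \<and> h \<in> G \<and> h \<noteq> id"
  proof
    fix v
    obtain h where "h \<in> rist v ` K" "h \<in> K" "h \<noteq> id" using wb unfolding weakly_branch_def by blast
    then show "\<exists>h. h \<in> rist v ` G \<and> h \<in> G \<and> h \<noteq> id" using KG by blast
  qed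
  ultimately show "weakly_branch G" unfolding weakly_branch_def by blast
next
  assume "\<exists>H. subgroup H W_grp \<and> H \<subseteq> G \<and> (\<forall>n. acts_trans_subtrees n ((mho2 ^^ n) H))"
  then obtain H where HG: "H \<subseteq> G" and at: "\<forall>n. acts_trans_subtrees n ((mho2 ^^ n) H)" by blast
  show "saturated G" unfolding saturated_def
  proof
    fix n
    define M where "M = (mho2 ^^ n) G"
    have P: "subgroup M W_grp" "M \<subseteq> G" "\<forall>h\<in>M. fixl n h"
      using mho_props[OF assms, of n] unfolding M_def by auto
    have "subgroup M (W_grp\<lparr>carrier := G\<rparr>)"
      by (rule group.subgroup_incl[OF W_group P(1) assms P(2)])
    moreover have "\<forall>\<phi> \<in> iso (W_grp\<lparr>carrier := G\<rparr>) (W_grp\<lparr>carrier := G\<rparr>). \<phi> ` M = M"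
      unfolding M_def using mho_char[OF assms] by blast
    ultimately have c: "characteristic M G" unfolding characteristic_def by blast
    have f: "fixes_level n M" using P(3) unfolding fixes_level_def fixl_def by blast
    have HM: "(mho2 ^^ n) H \<subseteq> M" unfolding M_def by (rule mho_mono[OF HG])
    have t: "\<forall>v. length v = n \<longrightarrow> level_transitive ((\<lambda>h. state h v) ` M)"
    proof (intro allI impI)
      fix v :: "bool list" assume "length v = n"
      then have "level_transitive ((\<lambda>h. state h v) ` (mho2 ^^ n) H)"
        using at unfolding acts_trans_subtrees_def by blast
      then show "level_transitive ((\<lambda>h. state h v) ` M)"
        using lt_mono HM by (meson image_mono)
    qed
    show "\<exists>H. characteristic H G \<and> fixes_level n H \<and>
        (\<forall>v. length v = n \<longrightarrow> level_transitive ((\<lambda>h. state h v) ` H))"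
      using c f t by blast
  qed
qed

end
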